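(* Let $A\in\mathbb{R}^{d\times n}$ (with $n>d$) have nonzero columns $a_1,\dots,a_n$, let $S\subset\{1,\dots,n\}$ with $|S|=m$, and let $A_S$ be the $d\times m$ matrix of columns $a_i$, $i\in S$, assumed to have full column rank. Suppose that for every $x_0'\in\mathbb{R}^n$ with support exactly $S$, writing $x'_{\mathrm{opt}}\in\mathbb{R}^m$ for its nonzero entries, we have $|a_j^T(A_S^{+})^T\operatorname{sign}(x'_{\mathrm{opt}})|<1$ for all $j\notin S$. Then $\max_{j\notin S}\|A_S^{+}a_j\|_1<1$.
   Context: $A_S^{+}$ is the Moore–Penrose pseudoinverse of $A_S$; $\operatorname{sign}$ is applied componentwise. *)

theory Defs
  imports "Jordan_Normal_Form.DL_Rank"
begin

text \<open>Matrices are Jordan_Normal_Form matrices; indices are 0-based.\<close>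

definition pinv :: "real mat \<Rightarrow> real mat" where
  "pinv A = (THE B. B \<in> carrier_mat (dim_col A) (dim_row A) \<and>
     A * B * A = A \<and> B * A * B = B \<and>
     transpose_mat (A * B) = A * B \<and> transpose_mat (B * A) = B * A)"

definition col_submat :: "real mat \<Rightarrow> nat set \<Rightarrow> real mat" where
  "col_submat A S = mat_of_cols (dim_row A) (map (col A) (sorted_list_of_set S))"

definition restrict_vec :: "real vec \<Rightarrow> nat set \<Rightarrow> real vec" where
  "restrict_vec x S = vec (card S) (\<lambda>k. x $ (sorted_list_of_set S ! k))"

definition sign_vec :: "real vec \<Rightarrow> real vec" where
  "sign_vec v = map_vec sgn v"

definition norm1_vec :: "real vec \<Rightarrow> real" where
  "norm1_vec v = (\<Sum>i<dim_vec v. \<bar>v $ i\<bar>)"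

end

theory Submission
  imports Defs
begin


lemma full_rank_facts:
  fixes M :: "real mat"
  assumes M: "M \<in> carrier_mat d m" and r: "vec_space.rank d M = m"
  shows "m \<le> d" and "\<And>x. x \<in> carrier_vec m \<Longrightarrow> M *\<^sub>v x = 0\<^sub>v d \<Longrightarrow> x = 0\<^sub>v m"
proof -
  interpret vec_space "TYPE(real)" d .
  have dist: "distinct (cols M)"
  proof (rule ccontr)
    assume nd: "\<not> distinct (cols M)"
    obtain S where mx: "maximal S (\<lambda>T. T \<subseteq> set (cols M) \<and> lin_indpt T)"
      using maximal_exists[of "(\<lambda>T. T \<subseteq> set (cols M) \<and> lin_indpt T)" "card (set (cols M))" "{}"]
      by (meson List.finite_set card_mono empty_iff empty_subsetI finite_lin_indpt2 rev_finite_subset)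
    then have "card S \<le> card (set (cols M))" by (simp add: card_mono maximal_def)
    also have "\<dots> < length (cols M)" using nd card_distinct card_length nat_less_le by metis
    also have "\<dots> = m" using M by simp
    finally have "card S < m" .
    then show False using rank_card_indpt[OF M mx] r by simp
  qed
  have li: "lin_indpt (set (cols M))" using full_rank_lin_indpt[OF M r dist] .
  have sub: "set (cols M) \<subseteq> carrier_vec d" using M cols_dim[of M] by (simp add: class_ring_simps)
  have "card (set (cols M)) \<le> dim" using li_le_dim(2)[OF fin_dim sub li] .
  then show "m \<le> d" using dist M dim_is_n by (simp add: distinct_card)
  fix x assume x: "x \<in> carrier_vec m" and z: "M *\<^sub>v x = 0\<^sub>v d"
  show "x = 0\<^sub>v m"
  proof (rule ccontr)
    assume "x \<noteq> 0\<^sub>v m"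
    from lin_depI[OF M x this z dist] li show False by blast
  qed
qed



lemma self_scalar_zero:
  fixes v :: "real vec"
  assumes "v \<in> carrier_vec k" "v \<bullet> v = 0" shows "v = 0\<^sub>v k"
proof -
  have "(\<Sum>i\<in>{0..<k}. v $ i * v $ i) = 0" using assms by (simp add: scalar_prod_def)
  then have "\<forall>i\<in>{0..<k}. v $ i * v $ i = 0" by (subst (asm) sum_nonneg_eq_0_iff) auto
  then show ?thesis using assms by (intro eq_vecI) auto
qed

lemma pinv_full_col_rank:
  fixes M :: "real mat"
  assumes M: "M \<in> carrier_mat d m" and r: "vec_space.rank d M = m"
  shows "pinv M \<in> carrier_mat m d"
proof -
  note inj = full_rank_facts(2)[OF M r]
  have Mt: "transpose_mat M \<in> carrier_mat m d" using M by simp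
  define G where "G = transpose_mat M * M"
  have G: "G \<in> carrier_mat m m" using M by (simp add: G_def)
  have Gsym: "transpose_mat G = G" unfolding G_def using M by (simp add: transpose_mult[OF Mt M])
  have "det G \<noteq> 0"
  proof
    assume "det G = 0"
    then obtain v where v: "v \<in> carrier_vec m" "v \<noteq> 0\<^sub>v m" "G *\<^sub>v v = 0\<^sub>v m"
      using det_0_iff_vec_prod_zero_field[OF G] by blast
    have Mv: "M *\<^sub>v v \<in> carrier_vec d" using M v by simp
    have "(transpose_mat M *\<^sub>v (M *\<^sub>v v)) \<bullet> v = (M *\<^sub>v v) \<bullet> (M *\<^sub>v v)"
      by (rule transpose_vec_mult_scalar[OF M v(1) Mv])
    moreover have "transpose_mat M *\<^sub>v (M *\<^sub>v v) = G *\<^sub>v v"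
      unfolding G_def using M v by (simp add: assoc_mult_mat_vec[OF Mt M v(1)])
    ultimately have "(M *\<^sub>v v) \<bullet> (M *\<^sub>v v) = 0" using v by simp
    then have "M *\<^sub>v v = 0\<^sub>v d" using self_scalar_zero Mv by blast
    then show False using inj v by blast
  qed
  then have "G \<in> Units (ring_mat TYPE(real) m ())" by (rule det_non_zero_imp_unit[OF G])
  then obtain Gi where Gi: "Gi \<in> carrier_mat m m" "Gi * G = 1\<^sub>m m" "G * Gi = 1\<^sub>m m"
    unfolding Units_def by (auto simp: ring_mat_simps)
  have Gti: "transpose_mat Gi * G = 1\<^sub>m m"
  proof -
    have "transpose_mat Gi * G = transpose_mat Gi * transpose_mat G" by (simp add: Gsym)
    also have "\<dots> = transpose_mat (G * Gi)" using transpose_mult[OF G Gi(1)] by simp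
    finally show ?thesis using Gi by simp
  qed
  have Gisym: "transpose_mat Gi = Gi"
  proof -
    have "transpose_mat Gi = transpose_mat Gi * (G * Gi)" using Gi by simp
    also have "\<dots> = (transpose_mat Gi * G) * Gi" using Gi G by (simp add: assoc_mult_mat)
    also have "\<dots> = Gi" using Gti Gi by simp
    finally show ?thesis .
  qed
  define B0 where "B0 = Gi * transpose_mat M"
  have B0: "B0 \<in> carrier_mat m d" using Gi M by (simp add: B0_def)
  have B0M: "B0 * M = 1\<^sub>m m"
    unfolding B0_def using assoc_mult_mat[OF Gi(1) Mt M] Gi by (simp add: G_def)
  let ?P = "\<lambda>B. B \<in> carrier_mat (dim_col M) (dim_row M) \<and>
     M * B * M = M \<and> B * M * B = B \<and>
     transpose_mat (M * B) = M * B \<and> transpose_mat (B * M) = B * M"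
  have "?P B0"
  proof (intro conjI)
    show "B0 \<in> carrier_mat (dim_col M) (dim_row M)" using B0 M by simp
    show "M * B0 * M = M" using assoc_mult_mat[OF M B0 M] B0M M by simp
    show "B0 * M * B0 = B0" using B0M B0 by simp
    show "transpose_mat (B0 * M) = B0 * M" using B0M by simp
    have "M * B0 = (M * Gi) * transpose_mat M" unfolding B0_def using assoc_mult_mat[OF M Gi(1) Mt] by simp
    moreover have "transpose_mat ((M * Gi) * transpose_mat M) = (M * Gi) * transpose_mat M"
    proof -
      have MGi: "M * Gi \<in> carrier_mat d m" using M Gi by simp
      have "transpose_mat ((M * Gi) * transpose_mat M) = M * transpose_mat (M * Gi)"
        using transpose_mult[OF MGi Mt] by simp
      also have "transpose_mat (M * Gi) = Gi * transpose_mat M"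
        using transpose_mult[OF M Gi(1)] Gisym by simp
      also have "M * (Gi * transpose_mat M) = (M * Gi) * transpose_mat M"
        using assoc_mult_mat[OF M Gi(1) Mt] by simp
      finally show ?thesis .
    qed
    ultimately show "transpose_mat (M * B0) = M * B0" by simp
  qed
  moreover have "B = B0" if "?P B" for B
  proof -
    have B: "B \<in> carrier_mat m d" and 1: "M * B * M = M" and 2: "transpose_mat (M * B) = M * B"
      using that M by auto
    have MB: "M * B \<in> carrier_mat d d" using M B by simp
    have "G * B = transpose_mat M * (M * B)" unfolding G_def using assoc_mult_mat[OF Mt M B] by simp
    also have "\<dots> = transpose_mat M * transpose_mat (M * B)" using 2 by simp
    also have "\<dots> = transpose_mat (M * B * M)" using transpose_mult[OF MB M] by simp
    also have "\<dots> = transpose_mat M" using 1 by simp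
    finally have GB: "G * B = transpose_mat M" .
    have "B = (Gi * G) * B" using Gi B by simp
    also have "\<dots> = Gi * (G * B)" using assoc_mult_mat[OF Gi(1) G B] .
    also have "\<dots> = B0" using GB B0_def by simp
    finally show ?thesis .
  qed
  ultimately have "pinv M = B0" unfolding pinv_def by (rule the_equality)
  then show ?thesis using B0 by simp
qed



theorem lemma3:
  fixes A :: "real mat" and d n m :: nat and S :: "nat set"
  assumes "A \<in> carrier_mat d n"
    and "n > d"
    and "\<forall>i<n. col A i \<noteq> 0\<^sub>v d"
    and "S \<subseteq> {0..<n}"
    and "card S = m"
    and "vec_space.rank d (col_submat A S) = m"
    and "\<forall>x0 \<in> carrier_vec n. {i. i < n \<and> x0 $ i \<noteq> 0} = S \<longrightarrow>
           (\<forall>j \<in> {0..<n} - S.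
              \<bar>col A j \<bullet> (transpose_mat (pinv (col_submat A S)) *\<^sub>v sign_vec (restrict_vec x0 S))\<bar> < 1)"
  shows "Max ((\<lambda>j. norm1_vec (pinv (col_submat A S) *\<^sub>v col A j)) ` ({0..<n} - S)) < 1"
proof -
  note Acar = assms(1)
  define M where "M = col_submat A S"
  define P where "P = pinv M"
  define L where "L = sorted_list_of_set S"
  have finS: "finite S" using assms(4) finite_subset by blast
  have Ldist: "distinct L" and Lset: "set L = S" and Llen: "length L = m"
    using finS assms(5) by (auto simp: L_def)
  have Mc: "M \<in> carrier_mat d m"
    unfolding M_def col_submat_def using Acar Llen by (auto simp: L_def)
  have r: "vec_space.rank d M = m" using assms(6) M_def by simp
  have Pc: "P \<in> carrier_mat m d" unfolding P_def using pinv_full_col_rank[OF Mc r] .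
  have md: "m \<le> d" using full_rank_facts(1)[OF Mc r] .
  have "card ({0..<n} - S) = n - m" using assms(4,5) finS by (simp add: card_Diff_subset)
  then have ne: "{0..<n} - S \<noteq> {}" using md assms(2) by (metis card.empty diff_is_0_eq le_trans less_le_not_le)
  have bound: "norm1_vec (P *\<^sub>v col A j) < 1" if j: "j \<in> {0..<n} - S" for j
  proof -
    define a where "a = col A j"
    have ac: "a \<in> carrier_vec d" using Acar j by (auto simp: a_def)
    define v where "v = P *\<^sub>v a"
    have vc: "v \<in> carrier_vec m" using Pc ac by (simp add: v_def)
    define x0 where "x0 = vec n (\<lambda>i. if i \<in> S then (if v $ (find_first i L) < 0 then -1 else (1::real)) else 0)"
    have x0c: "x0 \<in> carrier_vec n" by (simp add: x0_def)
    have supp: "{i. i < n \<and> x0 $ i \<noteq> 0} = S" using assms(4) by (auto simp: x0_def split: if_splits)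
    define s where "s = sign_vec (restrict_vec x0 S)"
    have sc: "s \<in> carrier_vec m" using assms(5) by (simp add: s_def sign_vec_def restrict_vec_def)
    have sk: "s $ k = (if v $ k < 0 then -1 else 1)" if k: "k < m" for k
    proof -
      have "L ! k \<in> S" using k Llen Lset nth_mem by blast
      moreover have "L ! k < n" using \<open>L ! k \<in> S\<close> assms(4) by auto
      moreover have "find_first (L ! k) L = k" using Ldist k Llen by (simp add: find_first_unique)
      ultimately show ?thesis using k assms(5)
        by (simp add: s_def sign_vec_def restrict_vec_def x0_def L_def[symmetric])
    qed
    have "\<bar>a \<bullet> (transpose_mat P *\<^sub>v s)\<bar> < 1"
      using assms(7) x0c supp j unfolding a_def s_def P_def M_def by blast
    moreover have "a \<bullet> (transpose_mat P *\<^sub>v s) = s \<bullet> v"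
    proof -
      have "a \<bullet> (transpose_mat P *\<^sub>v s) = (transpose_mat P *\<^sub>v s) \<bullet> a"
        by (rule comm_scalar_prod[OF ac]) (use Pc sc in simp)
      also have "\<dots> = s \<bullet> (P *\<^sub>v a)" by (rule transpose_vec_mult_scalar[OF Pc ac sc])
      finally show ?thesis by (simp add: v_def)
    qed
    moreover have "s \<bullet> v = norm1_vec v"
    proof -
      have "s \<bullet> v = (\<Sum>k\<in>{0..<m}. s $ k * v $ k)" using vc by (simp add: scalar_prod_def)
      also have "\<dots> = (\<Sum>k\<in>{0..<m}. \<bar>v $ k\<bar>)" by (rule sum.cong) (auto simp: sk)
      also have "\<dots> = norm1_vec v" using vc by (simp add: norm1_vec_def atLeast0LessThan)
      finally show ?thesis .
    qed
    ultimately show ?thesis by (simp add: v_def a_def)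
  qed
  show ?thesis unfolding M_def[symmetric] P_def[symmetric]
    using ne bound by (subst Max_less_iff) auto
qed

end
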